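(* Let $n \geq 2$, $m \geq 1$, and $r \in \{0,1, \dots, n-2\}$ be integers, let $\mathcal{X}_1, \dots, \mathcal{X}_m$ be vector spaces over a field $\mathbb{F}$, and for each $a \in \{1,\dots,n\}$ let $x_a = x_{a,1}\otimes\cdots\otimes x_{a,m}$ be a product vector (all $x_{a,j}\in\mathcal{X}_j$ non-zero). Suppose that: 1. For every index $j \in \{1,\dots,m\}$, $\dim \operatorname{span} \{ x_{a, j}: a \in \{1,\dots,n\}\} \geq 2$. 2. The vector $\sum_{a =1}^n x_a$ has tensor rank $r$, and for every subset $\Gamma \subset \{1,\dots,n\}$ with $r+1 \leq |\Gamma| \leq n-1$, the vector $\sum_{a \in \Gamma} x_a$ has tensor rank at least $r+1$. Then $n+r \geq m+2$.
   Context: A product vector in $\mathcal{X}_1\otimes\cdots\otimes\mathcal{X}_m$ is a vector $x_1\otimes\cdots\otimes x_m$ with all $x_j$ non-zero. The tensor rank of a non-zero vector $v$ is the smallest positive integer $r$ such that $v$ is a sum of $r$ product vectors; the tensor rank of the zero vector is $0$. *)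

theory Defs
  imports Complex_Main "HOL-Library.Function_Algebras"
begin

text \<open>Model: each space X_j is (a subspace of) the function space 'b => 'a over the field 'a.
  The tensor product X_1 (x) ... (x) X_m is realised inside the functions (nat => 'b) => 'a,
  where x_1 (x) ... (x) x_m is the function t |-> prod_{j=1..m} x_j (t j).
  This map from the algebraic tensor product is injective, so tensor rank is faithfully modelled.\<close>

definition fscale :: "'a::field \<Rightarrow> ('b \<Rightarrow> 'a) \<Rightarrow> ('b \<Rightarrow> 'a)" where
  "fscale c f = (\<lambda>x. c * f x)"

definition prod_vec :: "nat \<Rightarrow> (nat \<Rightarrow> 'b \<Rightarrow> 'a::field) \<Rightarrow> ((nat \<Rightarrow> 'b) \<Rightarrow> 'a)" where
  "prod_vec m x = (\<lambda>t. \<Prod>j\<in>{1..m}. x j (t j))"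

definition is_product_vector :: "nat \<Rightarrow> ((nat \<Rightarrow> 'b) \<Rightarrow> 'a::field) \<Rightarrow> bool" where
  "is_product_vector m v \<longleftrightarrow> (\<exists>x. (\<forall>j\<in>{1..m}. x j \<noteq> 0) \<and> v = prod_vec m x)"

definition tensor_rank :: "nat \<Rightarrow> ((nat \<Rightarrow> 'b) \<Rightarrow> 'a::field) \<Rightarrow> nat" where
  "tensor_rank m v = (LEAST r. \<exists>ys. (\<forall>i<r. is_product_vector m (ys i)) \<and> v = (\<Sum>i<r. ys i))"

end

theory Submission
  imports Defs
begin

interpretation fs: vector_space "fscale :: 'a::field \<Rightarrow> ('c \<Rightarrow> 'a) \<Rightarrow> ('c \<Rightarrow> 'a)"
  by unfold_locales (auto simp: fscale_def fun_eq_iff algebra_simps)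

lemma fscale_apply: "fscale c f x = c * f x" by (simp add: fscale_def)

definition ev :: "nat \<Rightarrow> 'b \<Rightarrow> ((nat \<Rightarrow> 'b) \<Rightarrow> 'a) \<Rightarrow> ((nat \<Rightarrow> 'b) \<Rightarrow> 'a)" where
  "ev j \<beta> T = (\<lambda>t. T (t(j := \<beta>)))"

lemma linear_ev: "Vector_Spaces.linear fscale fscale (ev j \<beta> :: ((nat \<Rightarrow> 'b) \<Rightarrow> 'a::field) \<Rightarrow> _)"
  unfolding Vector_Spaces.linear_iff
  apply (intro conjI)
  apply unfold_locales
  apply (auto simp: ev_def fun_eq_iff fscale_def algebra_simps)
  done

lemma ev_pv:
  fixes x :: "nat \<Rightarrow> 'b \<Rightarrow> 'a::field"
  assumes "j \<in> {1..m}"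
  shows "ev j \<beta> (prod_vec m x) = fscale (x j \<beta>) (prod_vec m (x(j := (\<lambda>_. 1))))"
proof (rule ext)
  fix t :: "nat \<Rightarrow> 'b"
  have "ev j \<beta> (prod_vec m x) t = (\<Prod>k\<in>{1..m}. x k ((t(j:=\<beta>)) k))"
    by (simp add: ev_def prod_vec_def)
  also have "\<dots> = x j \<beta> * (\<Prod>k\<in>{1..m}-{j}. x k ((t(j:=\<beta>)) k))"
    using assms by (subst prod.remove[of _ j]) auto
  also have "(\<Prod>k\<in>{1..m}-{j}. x k ((t(j:=\<beta>)) k)) = (\<Prod>k\<in>{1..m}-{j}. (x(j := (\<lambda>_. 1))) k (t k))"
    by (rule prod.cong) auto
  also have "\<dots> = prod_vec m (x(j := (\<lambda>_. 1))) t"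
    unfolding prod_vec_def using assms by (subst prod.remove[of _ j]) auto
  finally show "ev j \<beta> (prod_vec m x) t = fscale (x j \<beta>) (prod_vec m (x(j := (\<lambda>_. 1)))) t"
    by (simp add: fscale_apply)
qed

lemma ev_zero:
  assumes "\<And>\<beta>. ev j \<beta> T = 0" shows "T = 0"
proof (rule ext)
  fix t have "ev j (t j) T t = 0" using assms by simp
  then show "T t = 0 t" by (simp add: ev_def)
qed

lemma pv_nonzero:
  assumes "\<forall>k\<in>{1..m}. x k \<noteq> (0 :: 'b \<Rightarrow> 'a::field)"
  shows "prod_vec m x \<noteq> 0"
proof -
  have "\<forall>k\<in>{1..m}. \<exists>\<beta>. x k \<beta> \<noteq> 0" using assms by (auto simp: fun_eq_iff)
  then obtain g where g: "\<forall>k\<in>{1..m}. x k (g k) \<noteq> 0" by metis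
  have "prod_vec m x g \<noteq> 0" unfolding prod_vec_def using g by auto
  then show ?thesis by auto
qed

lemma ind_le_dim:
  fixes W :: "('c \<Rightarrow> 'a::field) set"
  assumes "finite W" "fs.independent B" "B \<subseteq> fs.span W"
  shows "card B \<le> fs.dim W"
proof -
  obtain B0 where B0: "B0 \<subseteq> W" "fs.independent B0" "W \<subseteq> fs.span B0" "card B0 = fs.dim W"
    using fs.basis_exists by blast
  have "B \<subseteq> fs.span B0"
    using assms(3) B0(3) by (meson fs.span_mono fs.span_span order_trans eq_refl fs.span_subspace fs.subspace_span fs.span_minimal)
  moreover have "finite B0" using B0(1) assms(1) finite_subset by blast
  ultimately show ?thesis using fs.independent_span_bound[of B0 B] assms(2) B0(4) by auto
qed

lemma span_sub: "A \<subseteq> fs.span B \<Longrightarrow> fs.span A \<subseteq> fs.span B"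
  by (rule fs.span_minimal) (auto intro: fs.subspace_span)

lemma lemC:
  fixes A B :: "('c \<Rightarrow> 'a::field) set"
  assumes fin: "finite A" "finite B" and T: "T \<noteq> 0" "T \<in> fs.span A" "T \<in> fs.span B"
  shows "fs.dim (A \<union> B) + 1 \<le> fs.dim A + fs.dim B"
proof -
  obtain BA where BA: "BA \<subseteq> A" "fs.independent BA" "A \<subseteq> fs.span BA" "card BA = fs.dim A"
    by (rule fs.basis_exists)
  obtain BB where BB: "BB \<subseteq> B" "fs.independent BB" "B \<subseteq> fs.span BB" "card BB = fs.dim B"
    by (rule fs.basis_exists)
  have finBA: "finite BA" using BA(1) fin(1) finite_subset by blast
  have finBB: "finite BB" using BB(1) fin(2) finite_subset by blast
  have sp: "A \<union> B \<subseteq> fs.span (BA \<union> BB)"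
    using BA(3) BB(3) fs.span_mono[of BA "BA \<union> BB"] fs.span_mono[of BB "BA \<union> BB"] by blast
  show ?thesis
  proof (cases "BA \<inter> BB = {}")
    case False
    have "fs.dim (A \<union> B) \<le> card (BA \<union> BB)" by (rule fs.dim_le_card[OF sp]) (simp add: finBA finBB)
    moreover have "card (BA \<union> BB) + card (BA \<inter> BB) = card BA + card BB"
      using card_Un_Int[OF finBA finBB] by simp
    moreover have "card (BA \<inter> BB) \<ge> 1"
    proof -
      have "finite (BA \<inter> BB)" using finBA by simp
      then have "card (BA \<inter> BB) > 0" using False by (simp add: card_gt_0_iff)
      then show ?thesis by simp
    qed
    ultimately show ?thesis using BA(4) BB(4) by linarith
  next
    case True
    have TA: "T \<in> fs.span BA" using T(2) span_sub[OF BA(3)] by blast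
    have TB: "T \<in> fs.span BB" using T(3) span_sub[OF BB(3)] by blast
    obtain u where u: "T = (\<Sum>v\<in>BA. fscale (u v) v)" using TA fs.span_finite[OF finBA] by auto
    obtain u' where u': "T = (\<Sum>v\<in>BB. fscale (u' v) v)" using TB fs.span_finite[OF finBB] by auto
    define g where "g v = (if v \<in> BA then u v else - u' v)" for v
    have "(\<Sum>v\<in>BA \<union> BB. fscale (g v) v) = (\<Sum>v\<in>BA. fscale (g v) v) + (\<Sum>v\<in>BB. fscale (g v) v)"
      by (rule sum.union_disjoint) (use True finBA finBB in auto)
    also have "(\<Sum>v\<in>BA. fscale (g v) v) = T" unfolding u g_def by (rule sum.cong) auto
    also have "(\<Sum>v\<in>BB. fscale (g v) v) = (\<Sum>v\<in>BB. - fscale (u' v) v)"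
      unfolding g_def using True by (intro sum.cong) (auto simp: fscale_def fun_eq_iff)
    also have "\<dots> = - T" unfolding u' by (simp add: sum_negf)
    finally have z: "(\<Sum>v\<in>BA \<union> BB. fscale (g v) v) = 0" by (simp only: add.right_inverse)
    have "\<exists>v\<in>BA. u v \<noteq> 0"
    proof (rule ccontr)
      assume "\<not> ?thesis"
      then have "T = 0" unfolding u by (auto simp: fscale_def fun_eq_iff intro!: sum.neutral)
      with T(1) show False by simp
    qed
    then have "\<exists>v\<in>BA \<union> BB. g v \<noteq> 0" unfolding g_def by auto
    then have "fs.dependent (BA \<union> BB)"
      unfolding fs.dependent_explicit using z finBA finBB by blast
    then obtain x where x: "x \<in> BA \<union> BB" "x \<in> fs.span (BA \<union> BB - {x})"
      using fs.dependent_def by blast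
    have "fs.span (BA \<union> BB) = fs.span (insert x (BA \<union> BB - {x}))" using x(1)
      by (simp add: insert_absorb)
    also have "\<dots> = fs.span (BA \<union> BB - {x})" by (rule fs.span_redundant[OF x(2)])
    finally have sp2: "A \<union> B \<subseteq> fs.span (BA \<union> BB - {x})" using sp by simp
    have "fs.dim (A \<union> B) \<le> card (BA \<union> BB - {x})" by (rule fs.dim_le_card[OF sp2]) (simp add: finBA finBB)
    also have "\<dots> = card BA + card BB - 1"
      using x(1) True finBA finBB by (simp add: card_Un_disjoint)
    finally have "fs.dim (A \<union> B) \<le> card BA + card BB - 1" .
    moreover have "card BA + card BB \<ge> 1"
      using x(1) finBA finBB by (auto simp: Suc_le_eq card_gt_0_iff)
    ultimately show ?thesis using BA(4) BB(4) by linarith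
  qed
qed

lemma lemA:
  fixes W :: "('c \<Rightarrow> 'a::field) set"
  assumes lin: "Vector_Spaces.linear fscale fscale \<Phi>"
    and fin: "finite W" "finite Q" and P: "P \<subseteq> W" "\<forall>p\<in>P. \<Phi> p = 0"
    and Q: "Q \<subseteq> \<Phi> ` fs.span W"
  shows "fs.dim Q + fs.dim P \<le> fs.dim W"
proof -
  interpret L: Vector_Spaces.linear fscale fscale \<Phi> by (rule lin)
  obtain C where C: "C \<subseteq> P" "fs.independent C" "P \<subseteq> fs.span C" "card C = fs.dim P"
    by (rule fs.basis_exists)
  obtain D where D: "C \<subseteq> D" "D \<subseteq> W" "fs.independent D" "W \<subseteq> fs.span D"
    using fs.maximal_independent_subset_extend[of C W] C(1,2) P(1) by blast
  have finD: "finite D" using D(2) fin(1) finite_subset by blast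
  have finC: "finite C" using D(1) finD finite_subset by blast
  have cardD: "card D = fs.dim W" using fs.basis_card_eq_dim[OF D(2) D(4) D(3)] .
  have "\<Phi> ` fs.span W \<subseteq> \<Phi> ` fs.span D" using span_sub[OF D(4)] by blast
  also have "\<Phi> ` fs.span D = fs.span (\<Phi> ` D)" by (rule L.span_image[symmetric])
  also have "fs.span (\<Phi> ` D) \<subseteq> fs.span (\<Phi> ` (D - C))"
  proof -
    have "\<Phi> ` D \<subseteq> insert 0 (\<Phi> ` (D - C))" using C(1) P(2) by auto
    then have "fs.span (\<Phi> ` D) \<subseteq> fs.span (insert 0 (\<Phi> ` (D - C)))" by (rule fs.span_mono)
    then show ?thesis by simp
  qed
  finally have "Q \<subseteq> fs.span (\<Phi> ` (D - C))" using Q by blast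
  then have "fs.dim Q \<le> card (\<Phi> ` (D - C))" by (rule fs.dim_le_card) (simp add: finD)
  also have "\<dots> \<le> card (D - C)" by (rule card_image_le) (simp add: finD)
  also have "\<dots> = card D - card C" by (rule card_Diff_subset[OF finC D(1)])
  finally show ?thesis using cardD C(4) card_mono[OF finD D(1)] by linarith
qed

definition par :: "('c \<Rightarrow> 'a::field) \<Rightarrow> ('c \<Rightarrow> 'a) \<Rightarrow> bool" where
  "par f g \<longleftrightarrow> (\<exists>c. f = fscale c g)"

lemma par_refl[simp]: "par f f"
  unfolding par_def by (rule exI[of _ 1]) (simp add: fscale_def)

definition ND :: "nat \<Rightarrow> 'i set \<Rightarrow> ('i \<Rightarrow> nat \<Rightarrow> 'b \<Rightarrow> 'a::field) \<Rightarrow> nat set" where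
  "ND m S X = {k \<in> {1..m}. \<exists>a\<in>S. \<exists>b\<in>S. \<not> par (X a k) (X b k)}"

definition conn :: "'i set \<Rightarrow> ('i \<Rightarrow> ('c \<Rightarrow> 'a::field)) \<Rightarrow> bool" where
  "conn S F \<longleftrightarrow> (\<forall>I. I \<subseteq> S \<longrightarrow> I \<noteq> {} \<longrightarrow> I \<noteq> S \<longrightarrow>
      (\<exists>T. T \<noteq> 0 \<and> T \<in> fs.span (F ` I) \<and> T \<in> fs.span (F ` (S - I))))"

lemma nonpar_det:
  fixes f g :: "'c \<Rightarrow> 'a::field"
  assumes "g \<noteq> 0" "\<not> par f g"
  shows "\<exists>\<beta>1 \<beta>2. f \<beta>2 * g \<beta>1 \<noteq> f \<beta>1 * g \<beta>2"
proof -
  obtain \<beta>1 where b1: "g \<beta>1 \<noteq> 0" using assms(1) by (auto simp: fun_eq_iff)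
  define c where "c = f \<beta>1 / g \<beta>1"
  have "f \<noteq> fscale c g" using assms(2) by (auto simp: par_def)
  then obtain \<beta>2 where "f \<beta>2 \<noteq> c * g \<beta>2" by (auto simp: fun_eq_iff fscale_def)
  then have "f \<beta>2 * g \<beta>1 \<noteq> f \<beta>1 * g \<beta>2" using b1 by (auto simp: c_def field_simps)
  then show ?thesis by blast
qed

lemma ev_span:
  fixes X :: "'i \<Rightarrow> nat \<Rightarrow> 'b \<Rightarrow> 'a::field"
  assumes j: "j \<in> {1..m}" and T: "T \<in> fs.span ((\<lambda>i. prod_vec m (X i)) ` I)"
  shows "ev j \<beta> T \<in> fs.span ((\<lambda>i. prod_vec m ((X i)(j := (\<lambda>_. 1)))) ` I)"
proof -
  interpret L: Vector_Spaces.linear fscale fscale "ev j \<beta> :: ((nat \<Rightarrow> 'b) \<Rightarrow> 'a) \<Rightarrow> _"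
    by (rule linear_ev)
  have "ev j \<beta> T \<in> ev j \<beta> ` fs.span ((\<lambda>i. prod_vec m (X i)) ` I)" using T by blast
  also have "\<dots> = fs.span (ev j \<beta> ` (\<lambda>i. prod_vec m (X i)) ` I)" by (rule L.span_image[symmetric])
  also have "\<dots> \<subseteq> fs.span ((\<lambda>i. prod_vec m ((X i)(j := (\<lambda>_. 1)))) ` I)"
  proof (rule span_sub, clarify)
    fix i assume "i \<in> I"
    show "ev j \<beta> (prod_vec m (X i)) \<in> fs.span ((\<lambda>i. prod_vec m ((X i)(j := (\<lambda>_. 1)))) ` I)"
      unfolding ev_pv[OF j] by (rule fs.span_scale, rule fs.span_base) (use \<open>i \<in> I\<close> in blast)
  qed
  finally show ?thesis .
qed

lemma conn_contract:
  fixes X :: "'i \<Rightarrow> nat \<Rightarrow> 'b \<Rightarrow> 'a::field"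
  assumes j: "j \<in> {1..m}" and c: "conn S (\<lambda>i. prod_vec m (X i))"
  shows "conn S (\<lambda>i. prod_vec m ((X i)(j := (\<lambda>_. 1))))"
  unfolding conn_def
proof (intro allI impI)
  fix I assume I: "I \<subseteq> S" "I \<noteq> {}" "I \<noteq> S"
  obtain T where T: "T \<noteq> 0" "T \<in> fs.span ((\<lambda>i. prod_vec m (X i)) ` I)"
    "T \<in> fs.span ((\<lambda>i. prod_vec m (X i)) ` (S - I))"
    using c I unfolding conn_def by blast
  have "\<not> (\<forall>\<beta>. ev j \<beta> T = 0)" using ev_zero[of j T] T(1) by metis
  then obtain \<beta> where b: "ev j \<beta> T \<noteq> 0" by blast
  show "\<exists>T. T \<noteq> 0 \<and> T \<in> fs.span ((\<lambda>i. prod_vec m ((X i)(j := (\<lambda>_. 1)))) ` I) \<and>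
            T \<in> fs.span ((\<lambda>i. prod_vec m ((X i)(j := (\<lambda>_. 1)))) ` (S - I))"
    using b ev_span[OF j T(2), of \<beta>] ev_span[OF j T(3), of \<beta>] by blast
qed

lemma lemB:
  fixes X :: "'i \<Rightarrow> nat \<Rightarrow> 'b \<Rightarrow> 'a::field"
  assumes j: "j \<in> {1..m}" and fin: "finite K" and nz: "\<forall>i\<in>K. X i j \<noteq> 0"
  shows "fs.dim ((\<lambda>i. prod_vec m ((X i)(j := (\<lambda>_. 1)))) ` K) \<le> fs.dim ((\<lambda>i. prod_vec m (X i)) ` K)"
proof -
  define v where "v i = prod_vec m ((X i)(j := (\<lambda>_. 1)))" for i
  define w where "w i = prod_vec m (X i)" for i
  have evw: "ev j \<beta> (w i) = fscale (X i j \<beta>) (v i)" for i \<beta>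
    unfolding v_def w_def by (rule ev_pv[OF j])
  obtain B where B: "B \<subseteq> v ` K" "fs.independent B" "v ` K \<subseteq> fs.span B" "card B = fs.dim (v ` K)"
    by (rule fs.basis_exists)
  have finB: "finite B" using B(1) fin finite_subset by blast
  define k where "k b = (SOME i. i \<in> K \<and> v i = b)" for b
  have k: "k b \<in> K" "v (k b) = b" if "b \<in> B" for b
  proof -
    have "\<exists>i. i \<in> K \<and> v i = b" using that B(1) by blast
    then show "k b \<in> K" "v (k b) = b" unfolding k_def by (metis (mono_tags, lifting) someI_ex)+
  qed
  define L where "L b = w (k b)" for b
  interpret E: Vector_Spaces.linear fscale fscale "ev j \<beta> :: ((nat \<Rightarrow> 'b) \<Rightarrow> 'a) \<Rightarrow> _" for \<beta>
    by (rule linear_ev)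
  have evL: "ev j \<beta> (L b) = fscale (X (k b) j \<beta>) b" if "b \<in> B" for b \<beta>
    unfolding L_def evw using k[OF that] by simp
  have claim1: "f b = 0" if sum0: "(\<Sum>b\<in>B. fscale (f b) (L b)) = 0" and b0: "b0 \<in> B" and "b = b0" for f b b0
  proof -
    obtain \<beta> where nzb: "X (k b0) j \<beta> \<noteq> 0" using nz k(1)[OF b0] by (auto simp: fun_eq_iff)
    have "ev j \<beta> (\<Sum>b\<in>B. fscale (f b) (L b)) = (\<Sum>b\<in>B. fscale (f b) (ev j \<beta> (L b)))"
      by (simp add: E.sum E.scale)
    also have "\<dots> = (\<Sum>b\<in>B. fscale (f b * X (k b) j \<beta>) b)"
      by (rule sum.cong) (auto simp: evL fscale_def fun_eq_iff)
    finally have "(\<Sum>b\<in>B. fscale (f b * X (k b) j \<beta>) b) = 0" using sum0 E.zero by simp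
    then have "f b0 * X (k b0) j \<beta> = 0"
      using fs.independentD[OF B(2) finB subset_refl, of "\<lambda>b. f b * X (k b) j \<beta>"] b0 by blast
    then show ?thesis using nzb \<open>b = b0\<close> by simp
  qed
  have inj: "inj_on L B"
  proof (rule inj_onI, rule ccontr)
    fix b1 b2 assume b: "b1 \<in> B" "b2 \<in> B" "L b1 = L b2" "b1 \<noteq> b2"
    obtain \<beta> where nzb: "X (k b1) j \<beta> \<noteq> 0" using nz k(1)[OF b(1)] by (auto simp: fun_eq_iff)
    have "fscale (X (k b1) j \<beta>) b1 = fscale (X (k b2) j \<beta>) b2"
      using evL[OF b(1)] evL[OF b(2)] b(3) by metis
    then have "b1 = fscale (X (k b2) j \<beta> / X (k b1) j \<beta>) b2"
      using nzb by (auto simp: fscale_def fun_eq_iff field_simps)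
    also have "\<dots> \<in> fs.span (B - {b1})"
      by (rule fs.span_scale, rule fs.span_base) (use b in blast)
    finally have "fs.dependent B" using b(1) fs.dependent_def by blast
    then show False using B(2) by blast
  qed
  have ind: "fs.independent (L ` B)"
  proof (rule fs.independent_if_scalars_zero)
    show "finite (L ` B)" using finB by simp
  next
    fix f x assume s: "(\<Sum>x\<in>L ` B. fscale (f x) x) = 0" and x: "x \<in> L ` B"
    have "(\<Sum>b\<in>B. fscale (f (L b)) (L b)) = 0"
      using s by (simp add: sum.reindex[OF inj])
    then show "f x = 0" using claim1[of "\<lambda>b. f (L b)"] x by blast
  qed
  have "card (L ` B) \<le> fs.dim (w ` K)"
  proof (rule ind_le_dim)
    show "finite (w ` K)" using fin by simp
    show "L ` B \<subseteq> fs.span (w ` K)"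
      using k(1) by (auto simp: L_def intro!: fs.span_base)
  qed (rule ind)
  then show ?thesis using card_image[OF inj] B(4) unfolding v_def w_def by simp
qed

lemma linear_Phi:
  "Vector_Spaces.linear fscale fscale
     (\<lambda>T::(nat \<Rightarrow> 'b) \<Rightarrow> 'a::field. fscale c1 (ev j \<beta>1 T) - fscale c2 (ev j \<beta>2 T))"
  unfolding Vector_Spaces.linear_iff
  apply (intro conjI)
  apply unfold_locales
  apply (auto simp: ev_def fun_eq_iff fscale_def algebra_simps)
  done

lemma lemW:
  fixes X :: "'i \<Rightarrow> nat \<Rightarrow> 'b \<Rightarrow> 'a::field"
  assumes "finite S" "S \<noteq> {}" "\<forall>i\<in>S. \<forall>k\<in>{1..m}. X i k \<noteq> 0"
    "conn S (\<lambda>i. prod_vec m (X i))"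
  shows "card (ND m S X) + 1 \<le> fs.dim ((\<lambda>i. prod_vec m (X i)) ` S)"
  using assms
proof (induction "card (ND m S X)" arbitrary: X)
  case 0
  obtain i where i: "i \<in> S" using 0 by auto
  have nz: "prod_vec m (X i) \<noteq> 0" using pv_nonzero 0 i by blast
  have "card {prod_vec m (X i)} \<le> fs.dim ((\<lambda>i. prod_vec m (X i)) ` S)"
  proof (rule ind_le_dim)
    show "finite ((\<lambda>i. prod_vec m (X i)) ` S)" using 0 by simp
    show "fs.independent {prod_vec m (X i)}" using nz by simp
    show "{prod_vec m (X i)} \<subseteq> fs.span ((\<lambda>i. prod_vec m (X i)) ` S)"
      using i by (auto intro: fs.span_base)
  qed
  then show ?case using "0.hyps" by simp
next
  case (Suc n)
  have finND: "finite (ND m S X)" unfolding ND_def by simp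
  have "ND m S X \<noteq> {}" using Suc.hyps(2) by auto
  then obtain j where "j \<in> ND m S X" by blast
  then obtain a b where j: "j \<in> {1..m}" and ab: "a \<in> S" "b \<in> S" "\<not> par (X a j) (X b j)"
    unfolding ND_def by blast
  define X' where "X' i = (X i)(j := (\<lambda>_. 1))" for i
  define v where "v i = prod_vec m (X' i)" for i
  define w where "w i = prod_vec m (X i)" for i
  have ND': "ND m S X' = ND m S X - {j}"
    unfolding ND_def X'_def by auto
  have card': "n = card (ND m S X')"
    unfolding ND' using Suc.hyps(2) \<open>j \<in> ND m S X\<close> finND by simp
  have nz': "\<forall>i\<in>S. \<forall>k\<in>{1..m}. X' i k \<noteq> 0"
    using Suc.prems(3) unfolding X'_def by (auto simp: fun_eq_iff)
  have conn': "conn S (\<lambda>i. prod_vec m (X' i))"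
    unfolding X'_def by (rule conn_contract[OF j Suc.prems(4)])
  have IH: "card (ND m S X') + 1 \<le> fs.dim (v ` S)"
    using Suc.hyps(1)[OF card' Suc.prems(1,2) nz' conn'] unfolding v_def .
  have evw: "ev j \<beta> (w i) = fscale (X i j \<beta>) (v i)" for i \<beta>
    unfolding v_def w_def X'_def by (rule ev_pv[OF j])
  have nzb: "X b j \<noteq> 0" using Suc.prems(3) ab(2) j by blast
  obtain \<beta>1 \<beta>2 where det: "X a j \<beta>2 * X b j \<beta>1 \<noteq> X a j \<beta>1 * X b j \<beta>2"
    using nonpar_det[OF nzb ab(3)] by blast
  define \<phi> where "\<phi> h = X a j \<beta>2 * h \<beta>1 - X a j \<beta>1 * h \<beta>2" for h :: "'b \<Rightarrow> 'a"
  define \<Phi> where "\<Phi> T = fscale (X a j \<beta>2) (ev j \<beta>1 T) - fscale (X a j \<beta>1) (ev j \<beta>2 T)"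
    for T :: "(nat \<Rightarrow> 'b) \<Rightarrow> 'a"
  have linPhi: "Vector_Spaces.linear fscale fscale \<Phi>" unfolding \<Phi>_def by (rule linear_Phi)
  have Phiw: "\<Phi> (w i) = fscale (\<phi> (X i j)) (v i)" for i
    unfolding \<Phi>_def evw \<phi>_def by (simp add: fscale_def fun_eq_iff algebra_simps)
  define K where "K = {i \<in> S. \<phi> (X i j) = 0}"
  define I where "I = S - K"
  have aK: "a \<in> K" unfolding K_def \<phi>_def using ab(1) by simp
  have bI: "b \<in> I" unfolding I_def K_def \<phi>_def using ab(2) det by simp
  have finK: "finite K" "finite I" using Suc.prems(1) unfolding K_def I_def by auto
  have SIK: "S = I \<union> K" "S - I = K" unfolding I_def K_def by auto
  have stepA: "fs.dim (v ` I) + fs.dim (w ` K) \<le> fs.dim (w ` S)"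
  proof (rule lemA[OF linPhi])
    show "finite (w ` S)" "finite (v ` I)" using Suc.prems(1) finK by auto
    show "w ` K \<subseteq> w ` S" using SIK by auto
    show "\<forall>p\<in>w ` K. \<Phi> p = 0" unfolding K_def by (auto simp: Phiw fscale_def fun_eq_iff)
    show "v ` I \<subseteq> \<Phi> ` fs.span (w ` S)"
    proof clarify
      fix i assume i: "i \<in> I"
      then have ne: "\<phi> (X i j) \<noteq> 0" and iS: "i \<in> S" unfolding I_def K_def by auto
      interpret L: Vector_Spaces.linear fscale fscale \<Phi> by (rule linPhi)
      have "\<Phi> (fscale (1 / \<phi> (X i j)) (w i)) = fscale (1 / \<phi> (X i j)) (fscale (\<phi> (X i j)) (v i))"
        by (simp only: L.scale Phiw)
      also have "\<dots> = v i" using ne by (simp add: fscale_def fun_eq_iff)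
      finally have "\<Phi> (fscale (1 / \<phi> (X i j)) (w i)) = v i" .
      moreover have "fscale (1 / \<phi> (X i j)) (w i) \<in> fs.span (w ` S)"
        using iS by (intro fs.span_scale fs.span_base) simp
      ultimately show "v i \<in> \<Phi> ` fs.span (w ` S)" by (blast intro: image_eqI[OF sym])
    qed
  qed
  have stepB: "fs.dim (v ` K) \<le> fs.dim (w ` K)"
    unfolding v_def w_def X'_def
    by (rule lemB[OF j finK(1)]) (use Suc.prems(3) j in \<open>auto simp: K_def\<close>)
  have stepC: "fs.dim (v ` I \<union> v ` K) + 1 \<le> fs.dim (v ` I) + fs.dim (v ` K)"
  proof -
    have I3: "I \<subseteq> S" "I \<noteq> {}" "I \<noteq> S"
      using bI aK ab(1) unfolding I_def by blast+
    have vv: "v = (\<lambda>i. prod_vec m (X' i))" by (simp add: v_def fun_eq_iff)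
    have cv: "conn S v" using conn' unfolding vv .
    obtain T where T: "T \<noteq> 0" "T \<in> fs.span (v ` I)" "T \<in> fs.span (v ` (S - I))"
      using cv[unfolded conn_def, rule_format, OF I3] by blast
    have f1: "finite (v ` I)" "finite (v ` K)" using finK by auto
    show ?thesis using lemC[OF f1 T(1) T(2)] T(3) unfolding SIK(2) by blast
  qed
  have "v ` S = v ` I \<union> v ` K" using SIK(1) by auto
  then have "fs.dim (v ` S) = fs.dim (v ` I \<union> v ` K)" by simp
  then have "fs.dim (v ` S) + 1 \<le> fs.dim (w ` S)" using stepA stepB stepC by linarith
  then show ?case using IH card' Suc.hyps(2) unfolding w_def by linarith
qed

lemma rank_decomp:
  assumes "finite F" "\<forall>i\<in>F. is_product_vector m (f i)"
  shows "tensor_rank m (\<Sum>i\<in>F. f i) \<le> card F"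
    and "\<exists>ys. (\<forall>i<tensor_rank m (\<Sum>i\<in>F. f i). is_product_vector m (ys i)) \<and>
              (\<Sum>i\<in>F. f i) = (\<Sum>i<tensor_rank m (\<Sum>i\<in>F. f i). ys i)"
proof -
  obtain h where h: "bij_betw h {0..<card F} F" using ex_bij_betw_nat_finite[OF assms(1)] by blast
  have "(\<Sum>i\<in>F. f i) = (\<Sum>i\<in>{0..<card F}. f (h i))"
    using sum.reindex_bij_betw[OF h, of f] by simp
  then have P: "\<exists>ys. (\<forall>i<card F. is_product_vector m (ys i)) \<and> (\<Sum>i\<in>F. f i) = (\<Sum>i<card F. ys i)"
    using assms(2) h bij_betwE[OF h] by (intro exI[of _ "\<lambda>i. f (h i)"]) (auto simp: lessThan_atLeast0)
  show "tensor_rank m (\<Sum>i\<in>F. f i) \<le> card F"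
    unfolding tensor_rank_def by (rule Least_le) (rule P)
  show "\<exists>ys. (\<forall>i<tensor_rank m (\<Sum>i\<in>F. f i). is_product_vector m (ys i)) \<and>
              (\<Sum>i\<in>F. f i) = (\<Sum>i<tensor_rank m (\<Sum>i\<in>F. f i). ys i)"
    unfolding tensor_rank_def by (rule LeastI_ex) (use P in blast)
qed

definition negv :: "(nat \<Rightarrow> 'b \<Rightarrow> 'a::field) \<Rightarrow> (nat \<Rightarrow> 'b \<Rightarrow> 'a)" where
  "negv y = y(1 := fscale (-1) (y 1))"

lemma pv_negv:
  fixes y :: "nat \<Rightarrow> 'b \<Rightarrow> 'a::field"
  assumes "m \<ge> 1"
  shows "prod_vec m (negv y) = - prod_vec m y"
proof (rule ext)
  fix t :: "nat \<Rightarrow> 'b"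
  have "prod_vec m (negv y) t = (negv y) 1 (t 1) * (\<Prod>k\<in>{1..m}-{1}. (negv y) k (t k))"
    unfolding prod_vec_def using assms by (subst prod.remove[of _ 1]) auto
  also have "\<dots> = - (y 1 (t 1) * (\<Prod>k\<in>{1..m}-{1}. y k (t k)))"
    by (simp add: negv_def fscale_def)
  also have "y 1 (t 1) * (\<Prod>k\<in>{1..m}-{1}. y k (t k)) = prod_vec m y t"
    unfolding prod_vec_def using assms by (subst prod.remove[of _ 1]) auto
  finally show "prod_vec m (negv y) t = (- prod_vec m y) t" by simp
qed

theorem theorem4:
  fixes x :: "nat \<Rightarrow> nat \<Rightarrow> 'b \<Rightarrow> 'a::field" and n m r :: nat
  assumes "n \<ge> 2" and "m \<ge> 1" and "r \<le> n - 2"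
    and "\<forall>a\<in>{1..n}. \<forall>j\<in>{1..m}. x a j \<noteq> 0"
    and "\<forall>j\<in>{1..m}. vector_space.dim fscale (module.span fscale ((\<lambda>a. x a j) ` {1..n})) \<ge> 2"
    and "tensor_rank m (\<Sum>a\<in>{1..n}. prod_vec m (x a)) = r"
    and "\<forall>\<Gamma>. \<Gamma> \<subseteq> {1..n} \<and> r + 1 \<le> card \<Gamma> \<and> card \<Gamma> \<le> n - 1 \<longrightarrow>
           tensor_rank m (\<Sum>a\<in>\<Gamma>. prod_vec m (x a)) \<ge> r + 1"
  shows "n + r \<ge> m + 2"
proof -
  define T where "T = (\<Sum>a\<in>{1..n}. prod_vec m (x a))"
  have pvx: "is_product_vector m (prod_vec m (x a))" if "a \<in> {1..n}" for a
    using assms(4) that unfolding is_product_vector_def by blast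
  obtain ys where ys: "\<forall>i<r. is_product_vector m (ys i)" "T = (\<Sum>i<r. ys i)"
    using rank_decomp(2)[of "{1..n}" m "\<lambda>a. prod_vec m (x a)"] pvx assms(6) unfolding T_def by auto
  have "\<forall>i\<in>{..<r}. \<exists>y. (\<forall>k\<in>{1..m}. y k \<noteq> 0) \<and> ys i = prod_vec m y"
    using ys(1) unfolding is_product_vector_def by blast
  then obtain Y where Y: "\<And>i. i < r \<Longrightarrow> (\<forall>k\<in>{1..m}. Y i k \<noteq> 0) \<and> ys i = prod_vec m (Y i)"
    using bchoice[of "{..<r}"] by (metis lessThan_iff)
  define Z where "Z i = (if i \<le> n then x i else negv (Y (i - Suc n)))" for i
  define S where "S = {1..n + r}"
  define Bof where "Bof J = {b. b < r \<and> Suc (n + b) \<in> J}" for J :: "nat set"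
  define e where "e b = Suc (n + b)" for b
  have inj_e: "inj e" unfolding e_def by (auto intro: injI)
  have Jdec: "J = (J \<inter> {1..n}) \<union> e ` Bof J" if "J \<subseteq> S" for J
  proof
    show "J \<subseteq> J \<inter> {1..n} \<union> e ` Bof J"
    proof
      fix i assume i: "i \<in> J"
      show "i \<in> J \<inter> {1..n} \<union> e ` Bof J"
      proof (cases "i \<le> n")
        case True then show ?thesis using i that unfolding S_def by auto
      next
        case False
        then have "i = e (i - Suc n)" "i - Suc n < r" using i that unfolding S_def e_def by auto
        then show ?thesis using i unfolding Bof_def e_def by (metis (mono_tags, lifting) UnI2 image_eqI mem_Collect_eq)
      qed
    qed
    show "J \<inter> {1..n} \<union> e ` Bof J \<subseteq> J" unfolding Bof_def e_def by auto
  qed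
  have pvZe: "prod_vec m (Z (e b)) = - ys b" if "b < r" for b
    unfolding Z_def e_def using Y[OF that] pv_negv[OF assms(2)] by simp
  have sumJ: "(\<Sum>i\<in>J. prod_vec m (Z i)) = (\<Sum>a\<in>J \<inter> {1..n}. prod_vec m (x a)) - (\<Sum>b\<in>Bof J. ys b)"
    if "J \<subseteq> S" for J
  proof -
    have fin: "finite (J \<inter> {1..n})" "finite (e ` Bof J)" "finite (Bof J)" unfolding Bof_def by auto
    have disj: "(J \<inter> {1..n}) \<inter> e ` Bof J = {}" unfolding e_def by auto
    have "(\<Sum>i\<in>J. prod_vec m (Z i)) = (\<Sum>i\<in>J \<inter> {1..n}. prod_vec m (Z i)) + (\<Sum>i\<in>e ` Bof J. prod_vec m (Z i))"
      using sum.union_disjoint[OF fin(1,2) disj] Jdec[OF that] by simp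
    also have "(\<Sum>i\<in>J \<inter> {1..n}. prod_vec m (Z i)) = (\<Sum>a\<in>J \<inter> {1..n}. prod_vec m (x a))"
      unfolding Z_def by (rule sum.cong) auto
    also have "(\<Sum>i\<in>e ` Bof J. prod_vec m (Z i)) = (\<Sum>b\<in>Bof J. prod_vec m (Z (e b)))"
      using sum.reindex[OF inj_on_subset[OF inj_e subset_UNIV], of "\<lambda>i. prod_vec m (Z i)" "Bof J"]
      by (simp add: comp_def)
    also have "\<dots> = (\<Sum>b\<in>Bof J. - ys b)"
      by (rule sum.cong) (auto simp: Bof_def pvZe)
    finally show ?thesis by (simp only: sum_negf diff_conv_add_uminus)
  qed
  have pvy: "is_product_vector m (ys b)" if "b < r" for b using ys(1) that by blast
  have rankB: "tensor_rank m (\<Sum>b\<in>B. ys b) \<le> card B" if "B \<subseteq> {..<r}" for B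
  proof (rule rank_decomp(1))
    show "finite B" using that finite_subset by blast
    show "\<forall>i\<in>B. is_product_vector m (ys i)" using that pvy by blast
  qed
  have zeroB: "B = {}" if B: "B \<subseteq> {..<r}" "(\<Sum>b\<in>B. ys b) = 0" for B
  proof -
    have finB: "finite B" using B(1) finite_subset by blast
    have "T = (\<Sum>b\<in>{..<r} - B. ys b) + (\<Sum>b\<in>B. ys b)"
      using ys(2) sum.subset_diff[OF B(1)] by simp
    then have "T = (\<Sum>b\<in>{..<r} - B. ys b)" using B(2) by simp
    then have "r \<le> card ({..<r} - B)" using rankB[of "{..<r} - B"] assms(6) unfolding T_def by auto
    also have "\<dots> = r - card B" using card_Diff_subset[OF finB B(1)] by simp
    finally have "r \<le> r - card B" .
    moreover have "card B \<le> r" using card_mono[OF _ B(1)] by simp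
    ultimately have "card B = 0" by arith
    then show ?thesis using finB by simp
  qed
  define g where "g i = (if i \<le> n then prod_vec m (x i) else ys (i - Suc n))" for i
  have half: "card A \<le> card B" if AB: "A \<subseteq> {1..n}" "A \<noteq> {1..n}" "B \<subseteq> {..<r}"
      "(\<Sum>a\<in>A. prod_vec m (x a)) = (\<Sum>b\<in>B. ys b)" for A B
  proof (rule ccontr)
    assume lt: "\<not> card A \<le> card B"
    have finA: "finite A" using AB(1) finite_subset by blast
    have finB: "finite B" using AB(3) finite_subset by blast
    have cB: "card B \<le> r" using card_mono[OF _ AB(3)] by simp
    have cA: "card A < n" using psubset_card_mono[of "{1..n}" A] AB(1,2) by auto
    show False
    proof (cases "r + 1 \<le> card A")
      case True
      have "r + 1 \<le> tensor_rank m (\<Sum>a\<in>A. prod_vec m (x a))" using assms(7) AB(1) True cA by auto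
      also have "\<dots> \<le> card B" using AB(4) rankB[OF AB(3)] by simp
      finally show False using cB by simp
    next
      case False
      define D where "D = {1..n} - A"
      have cD: "card D = n - card A" unfolding D_def using card_Diff_subset[OF finA AB(1)] by simp
      have "r + 1 - card A \<le> card D" using cD False assms(1,3) by arith
      then obtain S0 where S0: "S0 \<subseteq> D" "card S0 = r + 1 - card A"
        using obtain_subset_with_card_n by metis
      have finS0: "finite S0" using S0(1) unfolding D_def using finite_subset by blast
      have disj: "A \<inter> S0 = {}" using S0(1) unfolding D_def by blast
      define G where "G = A \<union> S0"
      have cG: "card G = r + 1" unfolding G_def using card_Un_disjoint[OF finA finS0 disj] S0(2) False by simp
      have GS: "G \<subseteq> {1..n}" unfolding G_def using AB(1) S0(1) unfolding D_def by blast
      have "r + 1 \<le> tensor_rank m (\<Sum>a\<in>G. prod_vec m (x a))"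
        using assms(7) GS cG assms(1,3) by auto
      also have "(\<Sum>a\<in>G. prod_vec m (x a)) = (\<Sum>i\<in>e ` B \<union> S0. g i)"
      proof -
        have d2: "e ` B \<inter> S0 = {}" using S0(1) unfolding D_def e_def by auto
        have "(\<Sum>i\<in>e ` B \<union> S0. g i) = (\<Sum>i\<in>e ` B. g i) + (\<Sum>i\<in>S0. g i)"
          by (rule sum.union_disjoint) (use finB finS0 d2 in auto)
        also have "(\<Sum>i\<in>e ` B. g i) = (\<Sum>b\<in>B. g (e b))"
          using sum.reindex[OF inj_on_subset[OF inj_e subset_UNIV], of g B] by (simp add: comp_def)
        also have "\<dots> = (\<Sum>b\<in>B. ys b)" by (rule sum.cong) (auto simp: g_def e_def)
        also have "(\<Sum>i\<in>S0. g i) = (\<Sum>a\<in>S0. prod_vec m (x a))"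
          using S0(1) unfolding D_def g_def by (intro sum.cong) auto
        also have "(\<Sum>a\<in>G. prod_vec m (x a)) = (\<Sum>a\<in>A. prod_vec m (x a)) + (\<Sum>a\<in>S0. prod_vec m (x a))"
          unfolding G_def by (rule sum.union_disjoint[OF finA finS0 disj])
        ultimately show ?thesis using AB(4) by metis
      qed
      also have "tensor_rank m (\<Sum>i\<in>e ` B \<union> S0. g i) \<le> card (e ` B \<union> S0)"
      proof (rule rank_decomp(1))
        show "finite (e ` B \<union> S0)" using finB finS0 by simp
        show "\<forall>i\<in>e ` B \<union> S0. is_product_vector m (g i)"
        proof
          fix i assume "i \<in> e ` B \<union> S0"
          then show "is_product_vector m (g i)"
          proof
            assume "i \<in> e ` B"
            then obtain b where "b \<in> B" "i = e b" by blast
            then show ?thesis using AB(3) pvy unfolding g_def e_def by auto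
          next
            assume "i \<in> S0"
            then have "i \<in> {1..n}" using S0(1) unfolding D_def by blast
            then show ?thesis using pvx unfolding g_def by auto
          qed
        qed
      qed
      also have "card (e ` B \<union> S0) \<le> card B + card S0"
        using card_Un_le[of "e ` B" S0] card_image_le[OF finB, of e] by linarith
      finally show False using S0(2) lt False by linarith
    qed
  qed
  have finS: "finite S" unfolding S_def by simp
  have SA: "S \<inter> {1..n} = {1..n}" unfolding S_def by auto
  have SB: "Bof S = {..<r}" unfolding S_def Bof_def by auto
  have tot: "(\<Sum>i\<in>S. prod_vec m (Z i)) = 0"
    using sumJ[of S] SA SB ys(2) unfolding T_def by simp
  have nz_sub: "(\<Sum>i\<in>I. prod_vec m (Z i)) \<noteq> 0" if I: "I \<subseteq> S" "I \<noteq> {}" "I \<noteq> S" for I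
  proof
    assume z: "(\<Sum>i\<in>I. prod_vec m (Z i)) = 0"
    have z2: "(\<Sum>i\<in>S - I. prod_vec m (Z i)) = 0"
      using sum.subset_diff[OF I(1) finS, of "\<lambda>i. prod_vec m (Z i)"] tot z by simp
    have SI: "S - I \<subseteq> S" by blast
    define A where "A = I \<inter> {1..n}"
    define A' where "A' = (S - I) \<inter> {1..n}"
    have eqA: "(\<Sum>a\<in>A. prod_vec m (x a)) = (\<Sum>b\<in>Bof I. ys b)"
      using sumJ[OF I(1)] z unfolding A_def by simp
    have eqA': "(\<Sum>a\<in>A'. prod_vec m (x a)) = (\<Sum>b\<in>Bof (S - I). ys b)"
      using sumJ[OF SI] z2 unfolding A'_def by simp
    have A'eq: "A' = {1..n} - A" unfolding A'_def A_def S_def by auto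
    have B'eq: "Bof (S - I) = {..<r} - Bof I" unfolding Bof_def S_def by auto
    have BS: "Bof I \<subseteq> {..<r}" "Bof (S - I) \<subseteq> {..<r}" unfolding Bof_def by auto
    have AS: "A \<subseteq> {1..n}" "A' \<subseteq> {1..n}" unfolding A_def A'_def by auto
    show False
    proof (cases "A = {}")
      case True
      then have "(\<Sum>b\<in>Bof I. ys b) = 0" using eqA by simp
      then have "Bof I = {}" using zeroB BS(1) by blast
      then have "I = {}" using Jdec[OF I(1)] True unfolding A_def by simp
      then show False using I(2) by simp
    next
      case Ane: False
      show False
      proof (cases "A = {1..n}")
        case True
        then have "A' = {}" using A'eq by simp
        then have "(\<Sum>b\<in>Bof (S - I). ys b) = 0" using eqA' by simp
        then have "Bof (S - I) = {}" using zeroB BS(2) by blast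
        then have "S - I = {}" using Jdec[OF SI] \<open>A' = {}\<close> unfolding A'_def by simp
        then show False using I(1,3) by blast
      next
        case False
        have h1: "card A \<le> card (Bof I)" by (rule half[OF AS(1) False BS(1) eqA])
        have "A' \<noteq> {1..n}" using A'eq Ane AS(1) by blast
        then have h2: "card A' \<le> card (Bof (S - I))" by (rule half[OF AS(2) _ BS(2) eqA'])
        have finA: "finite A" using AS(1) finite_subset by blast
        have finB: "finite (Bof I)" using BS(1) finite_subset by blast
        have "card A' = n - card A" unfolding A'eq using card_Diff_subset[OF finA AS(1)] by simp
        moreover have "card (Bof (S - I)) = r - card (Bof I)"
          unfolding B'eq using card_Diff_subset[OF finB BS(1)] by simp
        moreover have "card A \<le> n" using card_mono[OF _ AS(1)] by simp
        moreover have "card (Bof I) \<le> r" using card_mono[OF _ BS(1)] by simp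
        ultimately have "n \<le> r" using h1 h2 by arith
        then show False using assms(1,3) by arith
      qed
    qed
  qed
  define w where "w i = prod_vec m (Z i)" for i
  have ww: "(\<lambda>i. prod_vec m (Z i)) = w" by (simp add: w_def fun_eq_iff)
  have conn: "conn S (\<lambda>i. prod_vec m (Z i))"
    unfolding conn_def
  proof (intro allI impI)
    fix I assume I: "I \<subseteq> S" "I \<noteq> {}" "I \<noteq> S"
    define TI where "TI = (\<Sum>i\<in>I. prod_vec m (Z i))"
    have "TI \<noteq> 0" unfolding TI_def by (rule nz_sub[OF I])
    moreover have "TI \<in> fs.span ((\<lambda>i. prod_vec m (Z i)) ` I)"
      unfolding TI_def by (intro fs.span_sum fs.span_base) simp
    moreover have "TI \<in> fs.span ((\<lambda>i. prod_vec m (Z i)) ` (S - I))"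
    proof -
      have "TI + (\<Sum>i\<in>S - I. prod_vec m (Z i)) = 0"
        using sum.subset_diff[OF I(1) finS, of "\<lambda>i. prod_vec m (Z i)"] tot unfolding TI_def
        by (simp add: add.commute)
      then have "TI = - (\<Sum>i\<in>S - I. prod_vec m (Z i))" by (simp add: eq_neg_iff_add_eq_0)
      moreover have "(\<Sum>i\<in>S - I. prod_vec m (Z i)) \<in> fs.span ((\<lambda>i. prod_vec m (Z i)) ` (S - I))"
        by (intro fs.span_sum fs.span_base) simp
      ultimately show ?thesis using fs.span_neg by metis
    qed
    ultimately show "\<exists>T. T \<noteq> 0 \<and> T \<in> fs.span ((\<lambda>i. prod_vec m (Z i)) ` I) \<and>
        T \<in> fs.span ((\<lambda>i. prod_vec m (Z i)) ` (S - I))" by blast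
  qed
  have dimle: "fs.dim ((\<lambda>i. prod_vec m (Z i)) ` S) \<le> n + r - 1"
  proof -
    have oneS: "1 \<in> S" unfolding S_def using assms(1) by simp
    have "prod_vec m (Z 1) + (\<Sum>i\<in>S - {1}. prod_vec m (Z i)) = 0"
      using tot sum.remove[OF finS oneS, of "\<lambda>i. prod_vec m (Z i)"] by simp
    then have z1: "prod_vec m (Z 1) = - (\<Sum>i\<in>S - {1}. prod_vec m (Z i))"
      by (simp add: eq_neg_iff_add_eq_0)
    have "prod_vec m (Z 1) \<in> fs.span ((\<lambda>i. prod_vec m (Z i)) ` (S - {1}))"
      unfolding z1 by (intro fs.span_neg fs.span_sum fs.span_base) simp
    then have "(\<lambda>i. prod_vec m (Z i)) ` S \<subseteq> fs.span ((\<lambda>i. prod_vec m (Z i)) ` (S - {1}))"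
    proof (intro image_subsetI)
      fix i assume i: "i \<in> S" and h1: "prod_vec m (Z 1) \<in> fs.span ((\<lambda>i. prod_vec m (Z i)) ` (S - {1}))"
      show "prod_vec m (Z i) \<in> fs.span ((\<lambda>i. prod_vec m (Z i)) ` (S - {1}))"
      proof (cases "i = 1")
        case True then show ?thesis using h1 by simp
      next
        case False then show ?thesis using i by (intro fs.span_base) simp
      qed
    qed
    then have "fs.dim ((\<lambda>i. prod_vec m (Z i)) ` S) \<le> card ((\<lambda>i. prod_vec m (Z i)) ` (S - {1}))"
      by (rule fs.dim_le_card) (simp add: finS)
    also have "\<dots> \<le> card (S - {1})" by (rule card_image_le) (simp add: finS)
    also have "\<dots> = n + r - 1" using oneS finS unfolding S_def by simp
    finally show ?thesis .
  qed
  have nzZ: "\<forall>i\<in>S. \<forall>k\<in>{1..m}. Z i k \<noteq> 0"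
  proof (intro ballI)
    fix i k assume i: "i \<in> S" and k: "k \<in> {1..m}"
    show "Z i k \<noteq> 0"
    proof (cases "i \<le> n")
      case True
      then show ?thesis using assms(4) i k unfolding Z_def S_def by auto
    next
      case False
      then have b: "i - Suc n < r" using i unfolding S_def by auto
      have Yb: "\<forall>k\<in>{1..m}. Y (i - Suc n) k \<noteq> 0" using Y[OF b] by blast
      show ?thesis
      proof (cases "k = 1")
        case True
        then show ?thesis using Yb k False unfolding Z_def negv_def
          by (auto simp: fscale_def fun_eq_iff)
      next
        case False
        then show ?thesis using Yb k \<open>\<not> i \<le> n\<close> unfolding Z_def negv_def by auto
      qed
    qed
  qed
  have ND: "ND m S Z = {1..m}"
  proof
    show "ND m S Z \<subseteq> {1..m}" unfolding ND_def by blast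
    show "{1..m} \<subseteq> ND m S Z"
    proof
      fix k assume k: "k \<in> {1..m}"
      have "\<exists>a\<in>{1..n}. \<exists>b\<in>{1..n}. \<not> par (x a k) (x b k)"
      proof (rule ccontr)
        assume "\<not> ?thesis"
        then have allp: "\<forall>a\<in>{1..n}. par (x a k) (x 1 k)" using assms(1) by auto
        have "(\<lambda>a. x a k) ` {1..n} \<subseteq> fs.span {x 1 k}"
        proof clarify
          fix a assume "a \<in> {1..n}"
          then obtain c where "x a k = fscale c (x 1 k)" using allp unfolding par_def by blast
          then show "x a k \<in> fs.span {x 1 k}" by (simp add: fs.span_scale fs.span_base)
        qed
        then have "fs.dim ((\<lambda>a. x a k) ` {1..n}) \<le> card {x 1 k}" by (rule fs.dim_le_card) simp
        then have "fs.dim (fs.span ((\<lambda>a. x a k) ` {1..n})) \<le> 1" by simp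
        moreover have "2 \<le> fs.dim (fs.span ((\<lambda>a. x a k) ` {1..n}))" using assms(5) k by blast
        ultimately show False by linarith
      qed
      then obtain a b where ab: "a \<in> {1..n}" "b \<in> {1..n}" "\<not> par (x a k) (x b k)" by blast
      have "a \<in> S" "b \<in> S" "Z a = x a" "Z b = x b" using ab unfolding S_def Z_def by auto
      then have "\<exists>a\<in>S. \<exists>b\<in>S. \<not> par (Z a k) (Z b k)" using ab(3) by metis
      then show "k \<in> ND m S Z" unfolding ND_def using k by blast
    qed
  qed
  have "card (ND m S Z) + 1 \<le> fs.dim ((\<lambda>i. prod_vec m (Z i)) ` S)"
  proof (rule lemW[OF finS _ nzZ conn])
    show "S \<noteq> {}" unfolding S_def using assms(1) by auto
  qed
  then show ?thesis using ND dimle by simp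
qed

end
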